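(* Let $\alpha\in\mathbb{Q}(i)\setminus\mathbb{R}$ with $|\alpha|>1$, with minimal primitive polynomial $P_\alpha(X)=a_2X^2+a_1X+a_0$ ($a_0,a_1,a_2\in\mathbb{Z}$ coprime, $a_2>0$, $P_\alpha(\alpha)=0$), $\mathcal{D}=\{0,\ldots,|a_0|-1\}$ and $\Lambda_\alpha=\mathbb{Z}[\alpha]\cap\alpha^{-1}\mathbb{Z}[\alpha^{-1}]$, and assume $\alpha$ has the finiteness property in $\Lambda_\alpha$. For $k\ge0$ let $L_\alpha^k$ be the set of words $d_{k-1}\ldots d_0\in\mathcal{D}^k$ such that $\sum_{j=l}^{k-1}d_j\alpha^{j-l}\in\Lambda_\alpha$ for every $0\le l\le k-1$ (i.e. integer $\alpha$-expansions of length $k$, leading zeros allowed). Then $$\#L_\alpha^k\le\left\lceil\frac{|\mathcal{D}|}{a_2}\right\rceil^k.$$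
   Context: For $x\in\Lambda_\alpha$ there is a unique $d\in\mathcal{D}$ with $(x-d)/\alpha\in\Lambda_\alpha$, and $T_\alpha(x)=(x-d)/\alpha$; $\alpha$ has the finiteness property in $\Lambda_\alpha$ if for every $N\in\Lambda_\alpha$ the orbit under $T_\alpha$ reaches $0$. *)

theory Defs
  imports Complex_Main
begin

definition Zpoly :: "complex \<Rightarrow> complex set" where
  "Zpoly a = {z. \<exists>n (c :: nat \<Rightarrow> int). z = (\<Sum>j<n. of_int (c j) * a ^ j)}"

definition Lambda :: "complex \<Rightarrow> complex set" where
  "Lambda a = Zpoly a \<inter> (\<lambda>z. inverse a * z) ` Zpoly (inverse a)"

definition digits :: "int \<Rightarrow> int set" where
  "digits a0 = {0 .. \<bar>a0\<bar> - 1}"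

definition Tmap :: "complex \<Rightarrow> int \<Rightarrow> complex \<Rightarrow> complex" where
  "Tmap a a0 x = (let d = (THE d. d \<in> digits a0 \<and> (x - of_int d) / a \<in> Lambda a)
                  in (x - of_int d) / a)"

definition finiteness_property :: "complex \<Rightarrow> int \<Rightarrow> bool" where
  "finiteness_property a a0 \<longleftrightarrow> (\<forall>N \<in> Lambda a. \<exists>n. (Tmap a a0 ^^ n) N = 0)"

text \<open>Words \<open>d\<^sub>k\<^sub>-\<^sub>1\<dots>d\<^sub>0\<close>, represented as lists \<open>ds\<close> with \<open>ds ! j = d\<^sub>j\<close>.\<close>
definition Lwords :: "complex \<Rightarrow> int \<Rightarrow> nat \<Rightarrow> int list set" where
  "Lwords a a0 k = {ds. length ds = k \<and> set ds \<subseteq> digits a0 \<and>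
     (\<forall>l < k. (\<Sum>j = l..k-1. of_int (ds ! j) * a ^ (j - l)) \<in> Lambda a)}"

end

theory Submission imports Defs "HOL-Computational_Algebra.Polynomial" begin

lemma map_poly_of_int_add:
  "map_poly (of_int :: int \<Rightarrow> 'a::ring_1) (p + q) = map_poly of_int p + map_poly of_int q"
  by (rule poly_eqI) (simp add: coeff_map_poly)

lemma map_poly_of_int_mult:
  "map_poly (of_int :: int \<Rightarrow> 'a::comm_ring_1) (p * q) = map_poly of_int p * map_poly of_int q"
  by (rule poly_eqI) (simp add: coeff_map_poly coeff_mult of_int_sum)

lemma map_poly_of_int_smult:
  "map_poly (of_int :: int \<Rightarrow> 'a::comm_ring_1) (smult a p) = smult (of_int a) (map_poly of_int p)"
  by (rule poly_eqI) (simp add: coeff_map_poly)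

lemma gauss_dvd:
  fixes P R :: "int poly"
  assumes "content P = 1" "smult a R = P * q" "a \<noteq> 0"
  shows "P dvd R"
proof -
  have "content (smult a R) = content q" using assms by (simp add: content_mult)
  hence cq: "content q = \<bar>a\<bar> * content R" by simp
  have "smult a R = P * smult (content q) (primitive_part q)" using assms(2) by simp
  also have "\<dots> = smult a (smult (sgn a * content R) (P * primitive_part q))"
    using cq assms(3) by (simp add: abs_sgn mult.commute mult.left_commute)
  finally have "smult a R = smult a (smult (sgn a * content R) (P * primitive_part q))" .
  hence "R = smult (sgn a * content R) (P * primitive_part q)" using assms(3)
    by (metis smult_cancel)
  thus ?thesis by (metis dvd_smult dvd_triv_left)
qed

lemma int_poly_root:
  fixes r :: "int poly" and \<alpha> :: complex
  assumes "Im \<alpha> \<noteq> 0" "degree r < 2" "poly (map_poly of_int r) \<alpha> = 0"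
  shows "r = 0"
proof -
  have r: "r = [:coeff r 0, coeff r 1:]"
    using assms(2) by (auto simp: poly_eq_iff coeff_pCons split: nat.split intro: coeff_eq_0)
  have "poly (map_poly of_int r) \<alpha> = of_int (coeff r 0) + of_int (coeff r 1) * \<alpha>"
    by (subst r) (simp add: map_poly_pCons)
  with assms(3) have e: "of_int (coeff r 0) + of_int (coeff r 1) * \<alpha> = 0" by simp
  hence "Im (of_int (coeff r 0) + of_int (coeff r 1) * \<alpha>) = 0" by simp
  hence "coeff r 1 = 0" using assms(1) by simp
  with e have "coeff r 0 = 0" by simp
  with \<open>coeff r 1 = 0\<close> show ?thesis by (subst r) simp
qed

lemma key_dvd:
  fixes \<alpha> :: complex and a0 a1 a2 n :: int and c :: "nat \<Rightarrow> int"
  assumes im: "Im \<alpha> \<noteq> 0" and a2: "a2 \<noteq> 0" and cop: "gcd a0 (gcd a1 a2) = 1"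
    and root: "of_int a2 * \<alpha>^2 + of_int a1 * \<alpha> + of_int a0 = 0"
    and eq: "of_int n * \<alpha>^m = (\<Sum>j<m. of_int (c j) * \<alpha>^(m-1-j))"
  shows "a2 dvd n"
proof (cases "n = 0")
  case True thus ?thesis by simp
next
  case False
  define P where "P = [:a0, a1, a2:]"
  define R where "R = monom n m - (\<Sum>j<m. monom (c j) (m-1-j))"
  have P0: "P \<noteq> 0" unfolding P_def using a2 by auto
  have cP: "content P = 1" unfolding P_def using cop
    using a2 by (simp add: content_def cCons_def ac_simps)
  have evP: "poly (map_poly of_int P) \<alpha> = 0" unfolding P_def using root
    by (simp add: map_poly_pCons algebra_simps power2_eq_square)
  have mR: "map_poly (of_int :: int \<Rightarrow> complex) R =
     monom (of_int n) m - (\<Sum>j<m. monom (of_int (c j)) (m-1-j))"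
    unfolding R_def by (rule poly_eqI) (simp add: coeff_map_poly coeff_sum coeff_monom of_int_sum if_distrib cong: if_cong)
  have evR: "poly (map_poly of_int R) \<alpha> = 0" unfolding mR using eq
    by (simp add: poly_sum poly_monom)
  define r where "r = pseudo_mod R P"
  obtain a q where aq: "a \<noteq> 0" "smult a R = P * q + r"
    using pseudo_mod(1)[OF P0] unfolding r_def by blast
  have "degree P = 2" unfolding P_def using a2 by simp
  hence dr: "r = 0 \<or> degree r < 2"
    using pseudo_mod(2)[OF P0, of R] unfolding r_def by auto
  have "poly (map_poly of_int (smult a R)) \<alpha> = 0" using evR by (simp add: map_poly_of_int_smult)
  hence "poly (map_poly of_int r) \<alpha> = 0" using aq(2) evP by (simp add: map_poly_of_int_add map_poly_of_int_mult)
  hence "r = 0" using dr int_poly_root[OF im] by auto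
  hence "P dvd R" using gauss_dvd[OF cP _ aq(1)] aq(2) by simp
  then obtain S where S: "R = P * S" by auto
  have cR: "coeff R i = (if i = m then n else 0)" if "i \<ge> m" for i
    using that by (auto simp: R_def coeff_sum coeff_monom intro!: sum.neutral)
  have "degree R = m"
    by (rule order.antisym) (auto intro!: degree_le le_degree simp: cR False)
  hence "lead_coeff R = n" using cR by simp
  moreover have "lead_coeff R = a2 * lead_coeff S" unfolding S lead_coeff_mult
    using a2 by (simp add: P_def)
  ultimately show ?thesis by (metis dvd_triv_left)
qed

lemma Zpoly_diff:
  assumes "x \<in> Zpoly a" "y \<in> Zpoly a" shows "x - y \<in> Zpoly a"
proof -
  obtain n1 c1 where 1: "x = (\<Sum>j<n1. of_int (c1 j) * a ^ j)" using assms(1) by (auto simp: Zpoly_def)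
  obtain n2 c2 where 2: "y = (\<Sum>j<n2. of_int (c2 j) * a ^ j)" using assms(2) by (auto simp: Zpoly_def)
  define N where "N = max n1 n2"
  define c where "c j = (if j < n1 then c1 j else 0) - (if j < n2 then c2 j else 0)" for j
  have x: "x = (\<Sum>j<N. of_int (if j < n1 then c1 j else 0) * a ^ j)"
    unfolding 1 N_def by (rule sum.mono_neutral_cong_left) auto
  have y: "y = (\<Sum>j<N. of_int (if j < n2 then c2 j else 0) * a ^ j)"
    unfolding 2 N_def by (rule sum.mono_neutral_cong_left) auto
  have "x - y = (\<Sum>j<N. of_int (c j) * a ^ j)"
    unfolding x y c_def by (simp add: sum_subtractf algebra_simps)
  thus ?thesis unfolding Zpoly_def by blast
qed

lemma inv_poly_eq:
  fixes \<alpha> :: complex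
  assumes "\<alpha> \<noteq> 0" "of_int n = inverse \<alpha> * (\<Sum>j<m. of_int (c j) * inverse \<alpha> ^ j)"
  shows "of_int n * \<alpha>^m = (\<Sum>j<m. of_int (c j) * \<alpha>^(m-1-j))"
proof -
  have "of_int n * \<alpha>^m = (\<Sum>j<m. of_int (c j) * (inverse \<alpha> ^ Suc j * \<alpha>^m))"
    unfolding assms(2) by (simp add: sum_distrib_left sum_distrib_right algebra_simps)
  also have "\<dots> = (\<Sum>j<m. of_int (c j) * \<alpha>^(m-1-j))"
  proof (rule sum.cong)
    fix j assume "j \<in> {..<m}"
    hence "m = Suc j + (m-1-j)" by simp
    hence "\<alpha>^m = \<alpha>^(Suc j + (m-1-j))" by simp
    hence "\<alpha>^m = \<alpha>^Suc j * \<alpha>^(m-1-j)" by (simp only: power_add)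
    thus "of_int (c j) * (inverse \<alpha> ^ Suc j * \<alpha>^m) = of_int (c j) * \<alpha>^(m-1-j)"
      using assms(1) by (simp add: power_inverse field_simps)
  qed simp
  finally show ?thesis .
qed

lemma digit_diff_dvd:
  fixes \<alpha> y :: complex and a0 a1 a2 d d' :: int
  assumes im: "Im \<alpha> \<noteq> 0" and a2: "a2 \<noteq> 0" and cop: "gcd a0 (gcd a1 a2) = 1"
    and root: "of_int a2 * \<alpha>^2 + of_int a1 * \<alpha> + of_int a0 = 0"
    and h1: "of_int d + \<alpha> * y \<in> Lambda \<alpha>" and h2: "of_int d' + \<alpha> * y \<in> Lambda \<alpha>"
  shows "a2 dvd (d - d')"
proof -
  have a0: "\<alpha> \<noteq> 0" using im by auto
  obtain z1 where z1: "z1 \<in> Zpoly (inverse \<alpha>)" "of_int d + \<alpha> * y = inverse \<alpha> * z1"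
    using h1 by (auto simp: Lambda_def)
  obtain z2 where z2: "z2 \<in> Zpoly (inverse \<alpha>)" "of_int d' + \<alpha> * y = inverse \<alpha> * z2"
    using h2 by (auto simp: Lambda_def)
  have "z1 - z2 \<in> Zpoly (inverse \<alpha>)" using Zpoly_diff z1 z2 by blast
  then obtain m c where zc: "z1 - z2 = (\<Sum>j<m. of_int (c j) * inverse \<alpha> ^ j)"
    by (auto simp: Zpoly_def)
  have "of_int (d - d') = (of_int d + \<alpha> * y) - (of_int d' + \<alpha> * y)" by simp
  also have "\<dots> = inverse \<alpha> * (z1 - z2)" unfolding z1(2) z2(2) by (simp add: right_diff_distrib)
  finally have "of_int (d - d') = inverse \<alpha> * (z1 - z2)" .
  hence "of_int (d - d') = inverse \<alpha> * (\<Sum>j<m. of_int (c j) * inverse \<alpha> ^ j)" using zc by simp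
  from inv_poly_eq[OF a0 this] show ?thesis using key_dvd[OF im a2 cop root] by blast
qed

lemma card_residue:
  fixes S :: "int set" and N a2 :: int
  assumes "S \<subseteq> {0..N-1}" "a2 > 0" "\<And>x y. x \<in> S \<Longrightarrow> y \<in> S \<Longrightarrow> a2 dvd (x - y)"
  shows "card S \<le> nat \<lceil>real_of_int N / real_of_int a2\<rceil>"
proof (cases "S = {}")
  case True thus ?thesis by simp
next
  case False
  then obtain s0 where s0: "s0 \<in> S" by auto
  hence N1: "N \<ge> 1" using assms(1) by auto
  have inj: "inj_on (\<lambda>d. d div a2) S"
  proof (rule inj_onI)
    fix x y assume xy: "x \<in> S" "y \<in> S" "x div a2 = y div a2"
    have "x mod a2 = y mod a2" using assms(3)[OF xy(1,2)] by (simp add: mod_eq_dvd_iff)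
    thus "x = y" using xy(3) by (metis div_mult_mod_eq)
  qed
  have img: "(\<lambda>d. d div a2) ` S \<subseteq> {0..(N-1) div a2}"
  proof
    fix z assume "z \<in> (\<lambda>d. d div a2) ` S"
    then obtain d where d: "d \<in> S" "z = d div a2" by auto
    hence "0 \<le> d" "d \<le> N - 1" using assms(1) by auto
    thus "z \<in> {0..(N-1) div a2}" using d(2) assms(2) by (simp add: zdiv_mono1 pos_imp_zdiv_nonneg_iff)
  qed
  have "card S = card ((\<lambda>d. d div a2) ` S)" using card_image[OF inj] by simp
  also have "\<dots> \<le> card {0..(N-1) div a2}" by (rule card_mono[OF _ img]) simp
  also have "\<dots> = nat ((N-1) div a2 + 1)" by simp
  also have "\<dots> \<le> nat \<lceil>real_of_int N / real_of_int a2\<rceil>"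
  proof -
    have m: "0 \<le> (N-1) mod a2" using assms(2) by simp
    have "a2 * ((N-1) div a2) + (N-1) mod a2 = N - 1" by (rule mult_div_mod_eq)
    hence "a2 * ((N-1) div a2) < N" using m by linarith
    hence "real_of_int (a2 * ((N-1) div a2)) < real_of_int N" by (simp only: of_int_less_iff)
    hence "real_of_int ((N-1) div a2) * real_of_int a2 < real_of_int N" by (simp add: mult.commute)
    hence "real_of_int ((N-1) div a2) < real_of_int N / real_of_int a2"
      using assms(2) by (simp add: pos_less_divide_eq)
    hence "(N-1) div a2 + 1 \<le> \<lceil>real_of_int N / real_of_int a2\<rceil>" by (simp add: le_ceiling_iff)
    thus ?thesis by simp
  qed
  finally show ?thesis .
qed

definition Vw :: "complex \<Rightarrow> int list \<Rightarrow> complex" where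
  "Vw a w = (\<Sum>j<length w. of_int (w ! j) * a ^ j)"

lemma Lwords_Suc:
  assumes "ds \<in> Lwords a a0 (Suc k)"
  shows "ds = hd ds # tl ds \<and> tl ds \<in> Lwords a a0 k \<and> hd ds \<in> digits a0 \<and>
         of_int (hd ds) + a * Vw a (tl ds) \<in> Lambda a"
proof -
  from assms have len: "length ds = Suc k" and sd: "set ds \<subseteq> digits a0"
    and cond: "\<And>l. l < Suc k \<Longrightarrow> (\<Sum>j = l..k. of_int (ds ! j) * a ^ (j - l)) \<in> Lambda a"
    by (auto simp: Lwords_def)
  obtain d w where ds: "ds = d # w" using len by (cases ds) auto
  have lw: "length w = k" using len ds by simp
  have "tl ds \<in> Lwords a a0 k"
    unfolding Lwords_def
  proof (intro CollectI conjI allI impI)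
    show "length (tl ds) = k" using lw ds by simp
    show "set (tl ds) \<subseteq> digits a0" using sd ds by auto
    fix l assume l: "l < k"
    then obtain k' where k': "k = Suc k'" by (cases k) auto
    have "(\<Sum>j = Suc l..Suc k'. of_int (ds ! j) * a ^ (j - Suc l)) \<in> Lambda a"
      using cond[of "Suc l"] l k' by simp
    hence "(\<Sum>j = l..k'. of_int (ds ! Suc j) * a ^ (Suc j - Suc l)) \<in> Lambda a"
      by (simp only: sum.shift_bounds_cl_Suc_ivl)
    thus "(\<Sum>j = l..k-1. of_int (tl ds ! j) * a ^ (j - l)) \<in> Lambda a"
      using ds k' by simp
  qed
  moreover have "(\<Sum>j = 0..k. of_int (ds ! j) * a ^ (j - 0)) \<in> Lambda a" using cond[of 0] by simp
  hence "(\<Sum>j < Suc k. of_int (ds ! j) * a ^ j) \<in> Lambda a"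
    by (simp add: atLeast0AtMost lessThan_Suc_atMost)
  hence "of_int d + a * Vw a w \<in> Lambda a"
    unfolding Vw_def sum.lessThan_Suc_shift lw ds by (simp add: sum_distrib_left algebra_simps)
  ultimately show ?thesis using ds sd by auto
qed

lemma finite_Lwords: "finite (Lwords a a0 k)"
proof (rule finite_subset)
  show "Lwords a a0 k \<subseteq> {xs. set xs \<subseteq> digits a0 \<and> length xs = k}" by (auto simp: Lwords_def)
  show "finite {xs. set xs \<subseteq> digits a0 \<and> length xs = k}"
    by (rule finite_lists_length_eq) (simp add: digits_def)
qed

lemma card_Lwords_le:
  fixes \<alpha> :: complex and a0 a1 a2 :: int
  assumes im: "Im \<alpha> \<noteq> 0" and a2: "a2 > 0" and cop: "gcd a0 (gcd a1 a2) = 1"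
    and root: "of_int a2 * \<alpha>^2 + of_int a1 * \<alpha> + of_int a0 = 0"
  shows "card (Lwords \<alpha> a0 k) \<le> nat \<lceil>real_of_int \<bar>a0\<bar> / real_of_int a2\<rceil> ^ k"
proof (induction k)
  case 0
  have "Lwords \<alpha> a0 0 = {[]}" by (auto simp: Lwords_def)
  thus ?case by simp
next
  case (Suc k)
  define C where "C = nat \<lceil>real_of_int \<bar>a0\<bar> / real_of_int a2\<rceil>"
  define B where "B w = {d \<in> digits a0. of_int d + \<alpha> * Vw \<alpha> w \<in> Lambda \<alpha>}" for w
  have finB: "finite (B w)" for w by (rule finite_subset[of _ "digits a0"]) (auto simp: B_def digits_def)
  have cB: "card (B w) \<le> C" for w
    unfolding C_def
  proof (rule card_residue)
    show "B w \<subseteq> {0..\<bar>a0\<bar> - 1}" by (auto simp: B_def digits_def)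
    show "0 < a2" by fact
    fix x y assume "x \<in> B w" "y \<in> B w"
    thus "a2 dvd (x - y)" unfolding B_def
      using digit_diff_dvd[OF im _ cop root] a2 by auto
  qed
  have "Lwords \<alpha> a0 (Suc k) \<subseteq> (\<lambda>(w, d). d # w) ` (SIGMA w:Lwords \<alpha> a0 k. B w)"
  proof
    fix ds assume "ds \<in> Lwords \<alpha> a0 (Suc k)"
    from Lwords_Suc[OF this] show "ds \<in> (\<lambda>(w, d). d # w) ` (SIGMA w:Lwords \<alpha> a0 k. B w)"
      unfolding B_def by (auto intro!: image_eqI[where x = "(tl ds, hd ds)"])
  qed
  hence "card (Lwords \<alpha> a0 (Suc k)) \<le> card ((\<lambda>(w, d). d # w) ` (SIGMA w:Lwords \<alpha> a0 k. B w))"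
    by (intro card_mono finite_imageI finite_SigmaI finite_Lwords finB)
  also have "\<dots> \<le> card (SIGMA w:Lwords \<alpha> a0 k. B w)" by (rule card_image_le) (intro finite_SigmaI finite_Lwords finB)
  also have "\<dots> = (\<Sum>w\<in>Lwords \<alpha> a0 k. card (B w))" by (rule card_SigmaI) (auto intro: finite_Lwords finB)
  also have "\<dots> \<le> (\<Sum>w\<in>Lwords \<alpha> a0 k. C)" by (rule sum_mono) (rule cB)
  also have "\<dots> = card (Lwords \<alpha> a0 k) * C" by simp
  also have "\<dots> \<le> C ^ k * C" using Suc.IH unfolding C_def by simp
  finally show ?case unfolding C_def by (simp add: mult.commute)
qed

theorem mainTheorem7:
  fixes \<alpha> :: complex and a0 a1 a2 :: int and k :: nat
  assumes "Re \<alpha> \<in> \<rat>" and "Im \<alpha> \<in> \<rat>" and "Im \<alpha> \<noteq> 0"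
    and "norm \<alpha> > 1"
    and "gcd a0 (gcd a1 a2) = 1" and "a2 > 0"
    and "of_int a2 * \<alpha>^2 + of_int a1 * \<alpha> + of_int a0 = 0"
    and "finiteness_property \<alpha> a0"
  shows "real (card (Lwords \<alpha> a0 k)) \<le> real_of_int (\<lceil>real (card (digits a0)) / real_of_int a2\<rceil>) ^ k"
proof -
  have cd: "real (card (digits a0)) = real_of_int \<bar>a0\<bar>" by (simp add: digits_def)
  have nn: "0 \<le> \<lceil>real_of_int \<bar>a0\<bar> / real_of_int a2\<rceil>" using assms(6) by (simp add: le_ceiling_iff) (smt (verit) divide_nonneg_pos of_int_0_less_iff abs_ge_zero)
  have "card (Lwords \<alpha> a0 k) \<le> nat \<lceil>real_of_int \<bar>a0\<bar> / real_of_int a2\<rceil> ^ k"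
    by (rule card_Lwords_le[OF assms(3) assms(6) assms(5) assms(7)])
  hence "real (card (Lwords \<alpha> a0 k)) \<le> real (nat \<lceil>real_of_int \<bar>a0\<bar> / real_of_int a2\<rceil> ^ k)"
    by (simp only: of_nat_le_iff)
  also have "\<dots> = real_of_int \<lceil>real_of_int \<bar>a0\<bar> / real_of_int a2\<rceil> ^ k"
    using nn by simp
  finally show ?thesis unfolding cd .
qed

end
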